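(* The Robertson graph is not a $(4,5,3)$-equitable cage; that is, the Robertson graph (which is a $4$-regular graph of girth $5$ and chromatic number $3$ on $19$ vertices) admits no proper $3$-coloring whose color classes have sizes differing pairwise by at most one (equivalently, no proper $3$-coloring with color class sizes $6,6,7$).
   Context: All graphs are finite and simple. The Robertson graph is the unique $(4,5)$-cage, i.e. the unique $4$-regular graph of girth $5$ with the minimum possible number of vertices, namely $19$. A proper vertex coloring is equitable if the sizes of any two color classes differ by at most one. An $(r,g,\chi)$-graph is an $r$-regular graph with girth exactly $g$ and chromatic number exactly $\chi$; an $(r,g,\chi)$-equitable graph is one admitting an equitable proper $\chi$-coloring, and an $(r,g,\chi)$-equitable cage is an $(r,g,\chi)$-equitable graph of minimum order. *)

theory Defs
  imports Main
begin

definition proper_coloring :: "'a set \<Rightarrow> ('a \<Rightarrow> 'a \<Rightarrow> bool) \<Rightarrow> nat \<Rightarrow> ('a \<Rightarrow> nat) \<Rightarrow> bool" where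
  "proper_coloring V E k c \<longleftrightarrow>
     (\<forall>v\<in>V. c v < k) \<and> (\<forall>u\<in>V. \<forall>v\<in>V. E u v \<longrightarrow> c u \<noteq> c v)"

definition equitable_coloring :: "'a set \<Rightarrow> ('a \<Rightarrow> 'a \<Rightarrow> bool) \<Rightarrow> nat \<Rightarrow> ('a \<Rightarrow> nat) \<Rightarrow> bool" where
  "equitable_coloring V E k c \<longleftrightarrow>
     proper_coloring V E k c \<and>
     (\<forall>i<k. \<forall>j<k. card {v\<in>V. c v = i} \<le> card {v\<in>V. c v = j} + 1)"

text \<open>The Robertson graph (the unique (4,5)-cage) on vertices 0..18:
  the Hamiltonian cycle 0-1-...-18-0 plus 19 chords.\<close>

definition robertson_V :: "nat set" where
  "robertson_V = {0..<19}"

definition robertson_edge_list :: "(nat \<times> nat) list" where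
  "robertson_edge_list =
     [(i, Suc i mod 19). i \<leftarrow> [0..<19]] @
     [(0,4),(0,7),(1,9),(1,12),(2,6),(2,14),(3,8),(3,11),(4,15),(5,13),
      (5,17),(6,10),(7,16),(8,13),(9,17),(10,15),(11,18),(12,16),(14,18)]"

definition robertson_adj :: "nat \<Rightarrow> nat \<Rightarrow> bool" where
  "robertson_adj u v \<longleftrightarrow>
     (u, v) \<in> set robertson_edge_list \<or> (v, u) \<in> set robertson_edge_list"

end

theory Submission
  imports Defs
begin

definition pnb :: "nat \<Rightarrow> nat list" where
 "pnb v = filter (\<lambda>u. robertson_adj u v) [0..<v]"
definition pnbt :: "nat list list" where
 "pnbt = [[],[0],[1],[2],[0,3],[4],[2,5],[0,6],[3,7],[1,8],[6,9],[3,10],[1,11],[5,8,12],[2,13],[4,10,14],[7,12,15],[5,9,16],[0,11,14,17]]"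
lemma tab: "map pnb [0..<19] = pnbt"
  by code_simp
lemma pnbt_nth: "n < 19 \<Longrightarrow> set (pnbt ! n) = {u. u < n \<and> robertson_adj u n}"
  unfolding tab[symmetric] by (auto simp: pnb_def)
definition okx :: "nat list \<Rightarrow> nat \<Rightarrow> bool" where
  "okx cs x \<longleftrightarrow> (\<forall>u\<in>set (pnbt ! length cs). cs ! u \<noteq> x)
     \<and> length (filter (\<lambda>y. y = x) (cs @ [x])) \<le> 7"

fun srch :: "nat \<Rightarrow> nat list \<Rightarrow> bool" where
  "srch 0 cs = (\<forall>i\<in>set [0..<3]. \<forall>j\<in>set [0..<3].
      length (filter (\<lambda>y. y = i) cs) \<le> length (filter (\<lambda>y. y = j) cs) + 1)"
| "srch (Suc k) cs = (\<exists>x\<in>set [0..<3]. okx cs x \<and> srch k (cs @ [x]))"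
lemma srch_false: "\<not> srch 19 []"
  by code_simp
lemma cnt: "length (filter (\<lambda>y. y = i) (map c [0..<n])) = card {v\<in>{0..<n}. c v = i}"
proof -
  have "length (filter (\<lambda>y. y = i) (map c [0..<n])) = card {j. j < length (map c [0..<n]) \<and> map c [0..<n] ! j = i}"
    by (rule length_filter_conv_card)
  also have "\<dots> = card {j. j < n \<and> c j = i}"
    by (rule arg_cong[where f=card]) auto
  also have "{j. j < n \<and> c j = i} = {v\<in>{0..<n}. c v = i}" by auto
  finally show ?thesis .
qed

lemma card_mono_pre: "(n::nat) \<le> 19 \<Longrightarrow> card {v\<in>{0..<n}. c v = i} \<le> card {v\<in>{0..<19}. c v = (i::nat)}"
  by (rule card_mono) auto

lemma main:
  assumes eq: "equitable_coloring robertson_V robertson_adj 3 c"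
  shows "k + n = 19 \<Longrightarrow> srch k (map c [0..<n])"
proof (induction k arbitrary: n)
  case 0
  then have n: "n = 19" by simp
  show ?case using eq unfolding n srch.simps cnt equitable_coloring_def robertson_V_def
    by auto
next
  case (Suc k)
  have pc: "proper_coloring robertson_V robertson_adj 3 c" and
    bal: "\<forall>i<3. \<forall>j<3. card {v\<in>robertson_V. c v = i} \<le> card {v\<in>robertson_V. c v = j} + 1"
    using eq unfolding equitable_coloring_def by auto
  have n: "n < 19" using Suc.prems by simp
  have lt: "c n < 3" using pc n unfolding proper_coloring_def robertson_V_def by auto
  have ok1: "\<forall>u\<in>set [0..<n]. robertson_adj u n \<longrightarrow> c u \<noteq> c n"
    using pc n unfolding proper_coloring_def robertson_V_def by auto
  have le7: "card {v\<in>{0..<19}. c v = i} \<le> 7" if "i < 3" for i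
  proof -
    have part: "{0..<19::nat} = {v\<in>{0..<19}. c v = 0} \<union> {v\<in>{0..<19}. c v = 1} \<union> {v\<in>{0..<19}. c v = 2}"
      using pc unfolding proper_coloring_def robertson_V_def by auto
    have "19 = card ({v\<in>{0..<19::nat}. c v = 0} \<union> {v\<in>{0..<19}. c v = 1} \<union> {v\<in>{0..<19}. c v = 2})"
      using part by (metis card_atLeastLessThan diff_zero)
    also have "\<dots> = card {v\<in>{0..<19::nat}. c v = 0} + card {v\<in>{0..<19}. c v = 1} + card {v\<in>{0..<19}. c v = 2}"
      by (subst card_Un_disjoint, auto)+
    finally have s: "19 = card {v\<in>{0..<19::nat}. c v = 0} + card {v\<in>{0..<19}. c v = 1} + card {v\<in>{0..<19}. c v = 2}" .
    have b: "\<And>i j. i<3 \<Longrightarrow> j<3 \<Longrightarrow> card {v\<in>{0..<19}. c v = i} \<le> card {v\<in>{0..<19}. c v = j} + 1"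
      using bal unfolding robertson_V_def by auto
    have "i = 0 \<or> i = 1 \<or> i = 2" using that by auto
    then show ?thesis using s b[of i 0] b[of i 1] b[of i 2] b[of 0 1] b[of 1 2] b[of 0 2] b[of 1 0] b[of 2 1] b[of 2 0] by auto
  qed
  have "length (filter (\<lambda>y. y = c n) (map c [0..<Suc n])) \<le> 7"
    unfolding cnt using card_mono_pre[of "Suc n" c "c n"] n le7[OF lt] by simp
  then have "okx (map c [0..<n]) (c n)"
    unfolding okx_def using ok1 n by (simp add: pnbt_nth)
  moreover have "srch k (map c [0..<n] @ [c n])"
    using Suc.IH[of "Suc n"] Suc.prems by simp
  ultimately show ?case using lt by auto
qed

theorem theorem6p1:
  shows "\<not> (\<exists>c. equitable_coloring robertson_V robertson_adj 3 c)"
  using main[of _ 19 0] srch_false by auto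

end
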